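(* Let $M\ge K\ge 2$ be integers and let $P_u>\frac{1}{M-1}$. Then $$K\log_2\!\left(1+\frac{P_uM}{P_u(K-1)+1}\right)\ge K\log_2\!\left(1+P_u(M-K+1)\right)$$ if and only if $K\ge K_{\mathrm{cross,UL}}:=M+1-\dfrac{1}{P_u}$.
   Context: The left-hand side is the paper's closed-form low-SNR ergodic uplink sum-rate expression for maximum ratio combining and the right-hand side that for zero-forcing reception, with $M$ base-station antennas, $K$ single-antenna users and per-user transmit power $P_u$ (unit noise variance). The lemma states that MRC gives the better sum rate exactly when the number of users is at least $K_{\mathrm{cross,UL}}$. *)

theory Defs
  imports Complex_Main
begin

definition K_cross_UL :: "nat \<Rightarrow> real \<Rightarrow> real" where
  "K_cross_UL M P_u = real M + 1 - 1 / P_u"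

end

theory Submission
  imports Defs
begin

theorem lemma10:
  fixes M K :: nat and P_u :: real
  assumes "M \<ge> K" and "K \<ge> 2" and "P_u > 1 / (real M - 1)"
  shows "real K * log 2 (1 + P_u * real M / (P_u * (real K - 1) + 1))
           \<ge> real K * log 2 (1 + P_u * (real M - real K + 1))
         \<longleftrightarrow> real K \<ge> K_cross_UL M P_u"
proof -
  have M2: "real M \<ge> 2" "real K \<ge> 2" "real M \<ge> real K" using assms by auto
  have P: "P_u > 0" using assms(3) M2 by (smt (verit) divide_pos_pos)
  define a where "a = P_u * (real K - 1) + 1"
  have a: "a > 0" using P M2 unfolding a_def by (smt (verit) mult_pos_pos)
  have b: "1 + P_u * (real M - real K + 1) > 0" using P M2 by (smt (verit) mult_pos_pos)
  have c: "1 + P_u * real M / a > 0" using P M2 a by (smt (verit) divide_pos_pos mult_pos_pos)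
  have "(real K * log 2 (1 + P_u * real M / a) \<ge> real K * log 2 (1 + P_u * (real M - real K + 1)))
        \<longleftrightarrow> (log 2 (1 + P_u * real M / a) \<ge> log 2 (1 + P_u * (real M - real K + 1)))"
    using M2 by simp
  also have "\<dots> \<longleftrightarrow> P_u * real M / a \<ge> P_u * (real M - real K + 1)"
    using b c by simp
  also have "\<dots> \<longleftrightarrow> real M / a \<ge> real M - real K + 1"
  proof -
    have "P_u * real M / a = P_u * (real M / a)" by simp
    thus ?thesis by (simp only: mult_le_cancel_left_pos[OF P])
  qed
  also have "\<dots> \<longleftrightarrow> real M \<ge> (real M - real K + 1) * a"
    using a by (simp add: pos_le_divide_eq)
  also have "\<dots> \<longleftrightarrow> (real K - 1) \<ge> (real M - real K + 1) * P_u * (real K - 1)"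
    unfolding a_def by (simp add: algebra_simps)
  also have "\<dots> \<longleftrightarrow> 1 \<ge> (real M - real K + 1) * P_u"
    using M2 mult_le_cancel_right[of 1 "real K - 1" "(real M - real K + 1) * P_u"] by simp
  also have "\<dots> \<longleftrightarrow> real K \<ge> K_cross_UL M P_u"
    unfolding K_cross_UL_def using P by (simp add: field_simps)
  finally show ?thesis unfolding a_def .
qed

end
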